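(* Let $p$ be an odd prime and $k\ge0$. For every $0\le l<p^k$ and $0\le l'<p^{k+1}$, every path $P\in\mathcal P(V_{1,l})\cup\mathcal P(W_{2,l'})$ has $\mathrm{des}(P)\in\{0,1\}$, and $$\mathcal M_{V_{1,l}}=\mathcal M_{W_{2,l'}}=\frac{p-1}{2}.$$
   Context: Fix an odd prime $p$ and an integer $k\ge 0$. For integers $0\le i<n$ write $\lambda(n,i)=(n-i,1^i)$ for the hook partition of $n$ with $n-i$ boxes in its first row and $i$ further boxes in its first column. If $\mu=\lambda(n',i')$ is obtained from $\lambda(n,i)$ by appending $m=(n'-i')-(n-i)\ge 0$ boxes to the first row and $n''=i'-i\ge 0$ boxes to the first column, we say $\mu$ is obtained by adding the block $B_{m,n''}$ ($m$ horizontal nodes, $n''$ vertical nodes). Put $x_s=p^k(sp-(s+1))$. The relevant part ("column $k$") of the $p$-Bratteli diagram is the graded directed graph with vertices: on floor $2k+1$, $S_i=\lambda(p^k(p-1),i)$ for $0\le i<p^k(p-1)$; on floor $2(k+s)$ ($s\ge1$), $V_{s,l}=\lambda\big(p^k(2sp-(2s+1)),\,x_s+l\big)$ for $0\le l<p^k$; on floor $2(k+s)-1$ ($s\ge2$), $W_{s,l'}=\lambda\big(p^k((2s-1)p-2s),\,x_{s-1}+l'\big)$ for $0\le l'<p^{k+1}$; and edges, each labelled by the block added: (E1) $S_i\to V_{1,l}$ exactly when $i=p^kt+l$ with $0\le t\le p-2$, block $B_{p^kt,\,p^k(p-2-t)}$; (E2) for $s\ge2$, $0\le l<p^k$, $0\le\beta\le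 p-1$: $V_{s-1,l}\to W_{s,pl+\beta}$, block $B_{p^k(p-1)-((p-1)l+\beta),\,(p-1)l+\beta}$; (E3) for $s\ge 2$, $0\le l'<p^{k+1}$ and $t=\lfloor l'/p^k\rfloor$: $W_{s,l'}\to V_{s,l'-p^kt}$, block $B_{p^kt,\,p^k(p-1-t)}$. A path ending at a vertex $v$ is a sequence of edges starting at some $S_i$ and going up one floor at a time to $v$ ($S_i\to V_{1,\cdot}\to W_{2,\cdot}\to V_{2,\cdot}\to W_{3,\cdot}\to\cdots\to v$); $\mathcal P(v)$ is the set of all paths ending at $v$. The blocks of a path are numbered $B^2,B^3,\dots,B^N$: $B^2$ is the block of the edge leaving $S_i$, and for $j\ge2$, $B^{2j-1}$ is the block of the edge into $W_{j,\cdot}$ and $B^{2j}$ the block of the edge into $V_{j,\cdot}$. Write $B^j=B_{m_j,n_j}$. Descents: $1\in\mathrm{Des}(P)$ iff $m_2=p^kt$ with $0\le t<\frac{p-1}{2}$; $2\notin\mathrm{Des}(P)$; for $3\le j<N$, $j\in\mathrm{Des}(P)$ iff $m_j>m_{j+1}$ and $n_j<n_{j+1}$. $\mathrm{des}(P)=|\mathrm{Des}(P)|$. The $p^k$-Fibonacci number of a vertex $v$ is $\mathcal M_v=\sum_{P\in\mathcal P(v)}\mathrm{des}(P)$. *)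

theory Defs
  imports Main "HOL-Computational_Algebra.Primes"
begin

text \<open>Vertices of column k of the p-Bratteli diagram:
  S i  (floor 2k+1),  V s l  (floor 2(k+s)),  W s l'  (floor 2(k+s)-1).\<close>
datatype vert = S nat | V nat nat | W nat nat

type_synonym block = "nat \<times> nat"

fun edge :: "nat \<Rightarrow> nat \<Rightarrow> vert \<Rightarrow> vert \<Rightarrow> block option" where
  "edge p k (S i) (V s l) =
     (if s = 1 \<and> i < p^k * (p - 1) \<and> l < p^k \<and> i mod p^k = l
      then Some (p^k * (i div p^k), p^k * (p - 2 - i div p^k)) else None)"
| "edge p k (V s l) (W s' l') =
     (if s \<ge> 1 \<and> s' = s + 1 \<and> l < p^k \<and> l' div p = l
      then Some (p^k * (p - 1) - ((p - 1) * l + l' mod p), (p - 1) * l + l' mod p)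
      else None)"
| "edge p k (W s l') (V s' l) =
     (if s \<ge> 2 \<and> s' = s \<and> l' < p^(k+1) \<and> l = l' mod p^k
      then Some (p^k * (l' div p^k), p^k * (p - 1 - l' div p^k)) else None)"
| "edge p k _ _ = None"

definition paths :: "nat \<Rightarrow> nat \<Rightarrow> vert \<Rightarrow> vert list set" where
  "paths p k v = {vs. 2 \<le> length vs
      \<and> (\<exists>i. hd vs = S i \<and> i < p^k * (p - 1))
      \<and> (\<forall>j < length vs - 1. edge p k (vs ! j) (vs ! (j + 1)) \<noteq> None)
      \<and> last vs = v}"

text \<open>The block B^j (j \<ge> 2) of a path: label of the (j-1)-st edge.\<close>
definition blk :: "nat \<Rightarrow> nat \<Rightarrow> vert list \<Rightarrow> nat \<Rightarrow> block" where
  "blk p k vs j = the (edge p k (vs ! (j - 2)) (vs ! (j - 1)))"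

text \<open>N = index of the last block = number of vertices of the path.\<close>
definition Des :: "nat \<Rightarrow> nat \<Rightarrow> vert list \<Rightarrow> nat set" where
  "Des p k vs =
     {j. j = 1 \<and> (\<exists>t. fst (blk p k vs 2) = p^k * t \<and> 2 * t < p - 1)}
   \<union> {j. 3 \<le> j \<and> j < length vs
        \<and> fst (blk p k vs j) > fst (blk p k vs (j + 1))
        \<and> snd (blk p k vs j) < snd (blk p k vs (j + 1))}"

definition des :: "nat \<Rightarrow> nat \<Rightarrow> vert list \<Rightarrow> nat" where
  "des p k vs = card (Des p k vs)"

definition fibM :: "nat \<Rightarrow> nat \<Rightarrow> vert \<Rightarrow> nat" where
  "fibM p k v = (\<Sum>P\<in>paths p k v. des p k P)"

end

theory Submission
  imports Defs
begin

fun rk :: "vert \<Rightarrow> nat" where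
  "rk (S i) = 0" | "rk (V s l) = 2*s - 1" | "rk (W s l) = 2*s - 2"

lemma edge_rk: "edge p k a b \<noteq> None \<Longrightarrow> rk b = Suc (rk a)"
  by (cases a; cases b) (auto split: if_splits)

lemma path_rk:
  assumes "vs \<in> paths p k v" "j < length vs"
  shows "rk (vs ! j) = j"
  using assms(2)
proof (induction j)
  case 0
  from assms(1) have ne: "vs \<noteq> []" unfolding paths_def by auto
  from assms(1) obtain i where "hd vs = S i" unfolding paths_def by auto
  then show ?case using ne by (simp add: hd_conv_nth)
next
  case (Suc j)
  from assms(1) Suc.prems have "edge p k (vs ! j) (vs ! (j+1)) \<noteq> None"
    unfolding paths_def by auto
  then have "rk (vs ! (j+1)) = Suc (rk (vs ! j))" by (rule edge_rk)
  then show ?case using Suc.IH Suc.prems by simp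
qed

lemma path_len:
  assumes "vs \<in> paths p k v"
  shows "length vs = Suc (rk v)"
proof -
  have "length vs \<ge> 2" "last vs = v" using assms unfolding paths_def by auto
  then have "vs ! (length vs - 1) = v" by (metis last_conv_nth list.size(3) not_numeral_le_zero)
  then have "rk v = length vs - 1"
    using path_rk[OF assms, of "length vs - 1"] \<open>length vs \<ge> 2\<close> by simp
  then show ?thesis using \<open>length vs \<ge> 2\<close> by simp
qed

definition f0 :: "nat \<Rightarrow> nat \<Rightarrow> nat \<Rightarrow> nat" where
  "f0 p k i = (if 2 * (i div p^k) < p - 1 then 1 else 0)"

lemma des_small:
  assumes "length vs \<le> 3" "length vs \<ge> 2" "vs ! 0 = S i" "vs ! 1 = V 1 (i mod p^k)"
    "i < p^k * (p - 1)"
  shows "des p k vs = f0 p k i"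
proof -
  have pk: "p^k > 0" using assms(5) by (cases "p = 0") auto
  have "i mod p^k < p^k" using pk by simp
  then have b: "blk p k vs 2 = (p^k * (i div p^k), p^k * (p - 2 - i div p^k))"
    using assms unfolding blk_def by simp
  have e: "(\<exists>t. p^k * (i div p^k) = p^k * t \<and> 2 * t < p - 1) = (2 * (i div p^k) < p - 1)"
    using pk by auto
  have "Des p k vs = (if 2 * (i div p^k) < p - 1 then {1} else {})"
    unfolding Des_def b using assms(1) e by auto
  then show ?thesis unfolding des_def f0_def by simp
qed

lemma count:
  assumes "L < p^k" "odd p"
  shows "(\<Sum>i\<in>{i. i < p^k * (p - 1) \<and> i mod p^k = L}. f0 p k i) = (p - 1) div 2"
proof -
  have pk: "p^k > 0" using assms(2) by (cases "p = 0") auto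
  have img: "{i. i < p^k * (p - 1) \<and> i mod p^k = L} = (\<lambda>t. p^k * t + L) ` {..<p-1}"
  proof (rule set_eqI, rule iffI)
    fix i assume "i \<in> {i. i < p^k * (p - 1) \<and> i mod p^k = L}"
    then have h: "i < p^k * (p - 1)" "i mod p^k = L" by auto
    have "i = p^k * (i div p^k) + L" using h(2) by (metis div_mult_mod_eq mult.commute)
    moreover have "i div p^k < p - 1" using h(1) pk
      by (simp add: div_less_iff_less_mult mult.commute)
    ultimately show "i \<in> (\<lambda>t. p^k * t + L) ` {..<p-1}" by blast
  next
    fix i assume "i \<in> (\<lambda>t. p^k * t + L) ` {..<p-1}"
    then obtain t where t: "t < p - 1" "i = p^k * t + L" by auto
    have "p^k * t + L < p^k * (t+1)" using assms(1) by simp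
    also have "\<dots> \<le> p^k * (p - 1)" using t(1) by (intro mult_le_mono2) simp
    finally show "i \<in> {i. i < p^k * (p - 1) \<and> i mod p^k = L}" using t assms(1) by simp
  qed
  have inj: "inj_on (\<lambda>t. p^k * t + L) {..<p-1}" using pk by (auto simp: inj_on_def)
  have fv: "f0 p k (p^k * t + L) = (if 2 * t < p - 1 then 1 else 0)" for t
    using pk assms(1) unfolding f0_def by simp
  have "(\<Sum>i\<in>{i. i < p^k * (p - 1) \<and> i mod p^k = L}. f0 p k i)
      = (\<Sum>t<p-1. (if 2 * t < p - 1 then 1 else 0::nat))"
    unfolding img sum.reindex[OF inj] by (simp add: fv comp_def)
  also have "\<dots> = card {t. t < p - 1 \<and> 2 * t < p - 1}"
    by (simp add: sum.If_cases Int_def)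
  also have "{t. t < p - 1 \<and> 2 * t < p - 1} = {..<(p-1) div 2}"
    using assms(2) by (auto elim!: oddE)
  finally show ?thesis by simp
qed

lemma pathsV:
  assumes "l < p^k"
  shows "paths p k (V 1 l) = (\<lambda>i. [S i, V 1 l]) ` {i. i < p^k * (p - 1) \<and> i mod p^k = l}"
proof (rule set_eqI, rule iffI)
  fix vs assume vs: "vs \<in> paths p k (V 1 l)"
  have len: "length vs = 2" using path_len[OF vs] by simp
  from vs obtain i where i: "hd vs = S i" "i < p^k * (p - 1)" "last vs = V 1 l"
    "edge p k (vs ! 0) (vs ! 1) \<noteq> None"
    unfolding paths_def using len by auto
  have v: "vs = [vs!0, vs!1]" using len by (cases vs; cases "tl vs"; auto)
  have v0: "vs!0 = S i" using i(1) len by (cases vs) auto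
  have "last [vs!0, vs!1] = vs!1" by simp
  then have v1: "vs!1 = V 1 l" using i(3) v by metis
  have "vs = [S i, V 1 l]" using v v0 v1 by simp
  then show "vs \<in> (\<lambda>i. [S i, V 1 l]) ` {i. i < p^k * (p - 1) \<and> i mod p^k = l}"
    using i by (auto split: if_splits)
next
  fix vs assume "vs \<in> (\<lambda>i. [S i, V 1 l]) ` {i. i < p^k * (p - 1) \<and> i mod p^k = l}"
  then show "vs \<in> paths p k (V 1 l)" using assms unfolding paths_def
    by (auto simp: less_Suc_eq)
qed

lemma pathsW:
  assumes "l' < p^(k+1)" "p > 0"
  shows "paths p k (W 2 l') = (\<lambda>i. [S i, V 1 (l' div p), W 2 l']) `
           {i. i < p^k * (p - 1) \<and> i mod p^k = l' div p}"
proof (rule set_eqI, rule iffI)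
  fix vs assume vs: "vs \<in> paths p k (W 2 l')"
  have len: "length vs = 3" using path_len[OF vs] by simp
  from vs obtain i where i: "hd vs = S i" "i < p^k * (p - 1)" "last vs = W 2 l'"
    "edge p k (vs ! 0) (vs ! 1) \<noteq> None"
    unfolding paths_def using len by (auto simp: numeral_3_eq_3)
  have al: "\<forall>j < length vs - 1. edge p k (vs ! j) (vs ! (j + 1)) \<noteq> None"
    using vs unfolding paths_def by blast
  have "1 < length vs - 1" using len by simp
  then have "edge p k (vs ! 1) (vs ! (1+1)) \<noteq> None" using al by blast
  then have i5: "edge p k (vs ! 1) (vs ! 2) \<noteq> None" by (metis one_add_one)
  have v: "vs = [vs!0, vs!1, vs!2]" using len
    by (cases vs; cases "tl vs"; cases "tl (tl vs)"; auto)
  have v0: "vs!0 = S i" using i(1) len by (cases vs) auto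
  have "last [vs!0, vs!1, vs!2] = vs!2" by simp
  then have v2: "vs!2 = W 2 l'" using i(3) v by metis
  obtain x where x: "vs!1 = x" by simp
  have "x = V 1 (l' div p) \<and> i mod p^k = l' div p"
    using i(4) i5 v0 v2 x by (cases x) (auto split: if_splits)
  then have "vs = [S i, V 1 (l' div p), W 2 l'] \<and> i mod p^k = l' div p"
    using v v0 v2 x by metis
  then show "vs \<in> (\<lambda>i. [S i, V 1 (l' div p), W 2 l']) `
           {i. i < p^k * (p - 1) \<and> i mod p^k = l' div p}" using i by auto
next
  fix vs assume "vs \<in> (\<lambda>i. [S i, V 1 (l' div p), W 2 l']) `
           {i. i < p^k * (p - 1) \<and> i mod p^k = l' div p}"
  moreover have "l' div p < p^k" using assms
    by (simp add: div_less_iff_less_mult mult.commute)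
  ultimately show "vs \<in> paths p k (W 2 l')" using assms unfolding paths_def
    by (auto simp: less_Suc_eq numeral_3_eq_3)
qed

theorem mainTheorem2:
  fixes p k l l' :: nat
  assumes "prime p" and "odd p" and "l < p^k" and "l' < p^(k+1)"
  shows "(\<forall>P \<in> paths p k (V 1 l) \<union> paths p k (W 2 l'). des p k P \<in> {0, 1})
         \<and> fibM p k (V 1 l) = (p - 1) div 2
         \<and> fibM p k (W 2 l') = (p - 1) div 2"
proof -
  have p0: "p > 0" using assms(2) by (cases p) auto
  have pk: "p^k > 0" using p0 by simp
  have L: "l' div p < p^k" using assms(4) p0
    by (simp add: div_less_iff_less_mult mult.commute)
  have dV: "des p k [S i, V 1 l] = f0 p k i" if "i < p^k * (p - 1)" "i mod p^k = l" for i
    using des_small[of "[S i, V 1 l]" i p k] that by simp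
  have dW: "des p k [S i, V 1 (l' div p), W 2 l'] = f0 p k i"
    if "i < p^k * (p - 1)" "i mod p^k = l' div p" for i
    using des_small[of "[S i, V 1 (l' div p), W 2 l']" i p k] that by simp
  have f01: "f0 p k i \<in> {0,1}" for i unfolding f0_def by simp
  have injV: "inj (\<lambda>i. [S i, V 1 l])" by (auto simp: inj_on_def)
  have injW: "inj (\<lambda>i. [S i, V 1 (l' div p), W 2 l'])" by (auto simp: inj_on_def)
  have A: "\<forall>P \<in> paths p k (V 1 l) \<union> paths p k (W 2 l'). des p k P \<in> {0, 1}"
    unfolding pathsV[OF assms(3)] pathsW[OF assms(4) p0] using dV dW by (auto simp: f0_def)
  have B: "fibM p k (V 1 l) = (p - 1) div 2"
    unfolding fibM_def pathsV[OF assms(3)] sum.reindex[OF inj_on_subset[OF injV subset_UNIV]]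
    using count[OF assms(3) assms(2)] sum.cong[OF refl, of _ "des p k \<circ> (\<lambda>i. [S i, V 1 l])" "f0 p k"] dV
    by (simp add: comp_def)
  have C: "fibM p k (W 2 l') = (p - 1) div 2"
    unfolding fibM_def pathsW[OF assms(4) p0] sum.reindex[OF inj_on_subset[OF injW subset_UNIV]]
    using count[OF L assms(2)] sum.cong[OF refl, of _ "des p k \<circ> (\<lambda>i. [S i, V 1 (l' div p), W 2 l'])" "f0 p k"] dW
    by (simp add: comp_def)
  show ?thesis using A B C by blast
qed

end
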